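(* Let $0<a<b<1$ with $a+b=1$, $m\in C^1([0,1])$ non-constant, $c\in C([0,1])$, and assume (H1), (H2) and $m\in S_{\mathcal{D}}$. Let $s_i\to+\infty$ be a sequence with $\lambda(s_i)\to\liminf_{s\to+\infty}\lambda(s)$ and $\varphi_1(s_i;\cdot)\to\varphi_*$ in $C([a,b])$ (such a sequence and limit exist). Then $\varphi_*(a)=\varphi_*(b)=0$.
   Context: Fix an integer $d\ge1$. $\lambda(s)$ denotes the principal eigenvalue of $-\varphi''-\frac{d-1}{r}\varphi'-2s\,m'(r)\varphi'+c(r)\varphi=\lambda\varphi$ on $(0,1)$, $\varphi'(0)=\varphi'(1)=0$; equivalently $\lambda(s)=\min\{\int_0^1 r^{d-1}e^{2sm}(|\varphi'|^2+c\varphi^2)dr:\ \varphi\in H^1((0,1)),\ \int_0^1 r^{d-1}e^{2sm}\varphi^2dr=1\}$; $\varphi_1(s;\cdot)$ is the positive minimizer, normalized by $\int_0^1 r^{d-1}e^{2sm}\varphi_1^2dr=1$. $\lambda^{\mathcal{D}}$ is the principal eigenvalue of $-\varphi''-\frac{d-1}{r}\varphi'+c\varphi=\lambda\varphi$ on $(a,b)$ with Dirichlet boundary conditions. (H1): $m(r)=m(1-r)$ on $[0,1]$ and $m\equiv0$ on $[a,b]$, where $a+b=1$. (H2): $c>0$ on $[0,1]$ and $c(r)>\lambda^{\mathcal{D}}$ for $r\in[0,a]\cup[b,1]$. Step function $\tilde m$: given $\delta\in(0,a)$, constants $0<h<\alpha<\beta<1<\nu$ and $l\in\mathbb{N}$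 with $\sum_{i\ge1}(\alpha^{i+l}+\beta^{i+l})=a-\delta$, put $x_0=\delta$, $x_n=\delta+\sum_{i=1}^n(\alpha^{i+l}+\beta^{i+l})$ ($n\ge1$), $y_n=x_n+\alpha^{n+l+1}$ ($n\ge0$); define $\tilde m(r)=-h^n$ on $[x_n,y_n)$ and $\tilde m(r)=\nu h^n$ on $[y_n,x_{n+1})$ for $n\ge0$, and $\tilde m(r)=\tilde m(1-r)$ for $r\in[b,1-\delta]$. $S_{\mathcal{D}}$: the set of $m\in C^1([0,1])$ such that, for some such $\delta,h,\alpha,\beta,\nu,l$, $m'$ changes sign only finitely many times in $[0,\delta)\cup(1-\delta,1]$ and $m(r)\ge\tilde m(r)$ for all $r\in[\delta,a]\cup[b,1-\delta]$. *)

theory Defs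
  imports "HOL-Analysis.Analysis"
begin

definition C1_on :: "real set \<Rightarrow> (real \<Rightarrow> real) \<Rightarrow> (real \<Rightarrow> real) \<Rightarrow> bool" where
  "C1_on S f f' \<longleftrightarrow> (\<forall>x\<in>S. (f has_real_derivative f' x) (at x within S)) \<and> continuous_on S f'"

definition energy :: "nat \<Rightarrow> (real \<Rightarrow> real) \<Rightarrow> (real \<Rightarrow> real) \<Rightarrow> real \<Rightarrow> (real \<Rightarrow> real) \<Rightarrow> (real \<Rightarrow> real) \<Rightarrow> real" where
  "energy d m c s \<phi> \<phi>' = integral {0..1} (\<lambda>r. r ^ (d - 1) * exp (2 * s * m r) * ((\<phi>' r)\<^sup>2 + c r * (\<phi> r)\<^sup>2))"

definition mass :: "nat \<Rightarrow> (real \<Rightarrow> real) \<Rightarrow> real \<Rightarrow> (real \<Rightarrow> real) \<Rightarrow> real" where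
  "mass d m s \<phi> = integral {0..1} (\<lambda>r. r ^ (d - 1) * exp (2 * s * m r) * (\<phi> r)\<^sup>2)"

text \<open>Principal Neumann eigenvalue lambda(s) (variational characterization; admissible
  functions are C^1 on [0,1], which is dense in H^1 and contains the minimizer).\<close>
definition lam :: "nat \<Rightarrow> (real \<Rightarrow> real) \<Rightarrow> (real \<Rightarrow> real) \<Rightarrow> real \<Rightarrow> real" where
  "lam d m c s = Inf {energy d m c s \<phi> \<phi>' | \<phi> \<phi>'. C1_on {0..1} \<phi> \<phi>' \<and> mass d m s \<phi> = 1}"

text \<open>Principal Dirichlet eigenvalue on (a,b): the eigenvalue having a positive eigenfunction.\<close>
definition lamD :: "nat \<Rightarrow> (real \<Rightarrow> real) \<Rightarrow> real \<Rightarrow> real \<Rightarrow> real" where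
  "lamD d c a b = (THE \<mu>. \<exists>\<phi> \<phi>' \<phi>''. C1_on {a..b} \<phi> \<phi>' \<and> C1_on {a..b} \<phi>' \<phi>'' \<and>
      \<phi> a = 0 \<and> \<phi> b = 0 \<and> (\<forall>x\<in>{a<..<b}. \<phi> x > 0) \<and>
      (\<forall>x\<in>{a..b}. - \<phi>'' x - real (d - 1) / x * \<phi>' x + c x * \<phi> x = \<mu> * \<phi> x))"

definition xseq :: "real \<Rightarrow> real \<Rightarrow> real \<Rightarrow> nat \<Rightarrow> nat \<Rightarrow> real" where
  "xseq \<delta> \<alpha> \<beta> l n = \<delta> + (\<Sum>i=1..n. \<alpha> ^ (i + l) + \<beta> ^ (i + l))"

definition yseq :: "real \<Rightarrow> real \<Rightarrow> real \<Rightarrow> nat \<Rightarrow> nat \<Rightarrow> real" where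
  "yseq \<delta> \<alpha> \<beta> l n = xseq \<delta> \<alpha> \<beta> l n + \<alpha> ^ (n + l + 1)"

definition mtilde_left :: "real \<Rightarrow> real \<Rightarrow> real \<Rightarrow> real \<Rightarrow> real \<Rightarrow> nat \<Rightarrow> real \<Rightarrow> real" where
  "mtilde_left \<delta> h \<alpha> \<beta> \<nu> l r =
     (let n = (THE n. xseq \<delta> \<alpha> \<beta> l n \<le> r \<and> r < xseq \<delta> \<alpha> \<beta> l (Suc n))
      in if r < yseq \<delta> \<alpha> \<beta> l n then - (h ^ n) else \<nu> * h ^ n)"

definition mtilde :: "real \<Rightarrow> real \<Rightarrow> real \<Rightarrow> real \<Rightarrow> real \<Rightarrow> real \<Rightarrow> real \<Rightarrow> nat \<Rightarrow> real \<Rightarrow> real" where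
  "mtilde a b \<delta> h \<alpha> \<beta> \<nu> l r =
     (if r \<in> {\<delta>..<a} then mtilde_left \<delta> h \<alpha> \<beta> \<nu> l r
      else if r \<in> {b<..1 - \<delta>} then mtilde_left \<delta> h \<alpha> \<beta> \<nu> l (1 - r)
      else 0)"

definition finite_sign_changes :: "(real \<Rightarrow> real) \<Rightarrow> real \<Rightarrow> real \<Rightarrow> bool" where
  "finite_sign_changes f p q \<longleftrightarrow> (\<exists>k::nat. \<exists>t::nat \<Rightarrow> real. t 0 = p \<and> t k = q \<and>
     (\<forall>j<k. t j < t (Suc j)) \<and>
     (\<forall>j<k. (\<forall>x\<in>{t j..t (Suc j)}. f x \<ge> 0) \<or> (\<forall>x\<in>{t j..t (Suc j)}. f x \<le> 0)))"

definition in_SD :: "real \<Rightarrow> real \<Rightarrow> (real \<Rightarrow> real) \<Rightarrow> (real \<Rightarrow> real) \<Rightarrow> bool" where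
  "in_SD a b m m' \<longleftrightarrow> (\<exists>\<delta> h \<alpha> \<beta> \<nu> (l::nat).
     0 < \<delta> \<and> \<delta> < a \<and> 0 < h \<and> h < \<alpha> \<and> \<alpha> < \<beta> \<and> \<beta> < 1 \<and> 1 < \<nu> \<and>
     (\<lambda>i. \<alpha> ^ (Suc i + l) + \<beta> ^ (Suc i + l)) sums (a - \<delta>) \<and>
     finite_sign_changes m' 0 \<delta> \<and> finite_sign_changes m' (1 - \<delta>) 1 \<and>
     (\<forall>r\<in>{\<delta>..a} \<union> {b..1 - \<delta>}. m r \<ge> mtilde a b \<delta> h \<alpha> \<beta> \<nu> l r))"

end

theory Submission
  imports Defs
begin
lemma xseq_Suc: "xseq \<delta> \<alpha> \<beta> l (Suc n) = xseq \<delta> \<alpha> \<beta> l n + (\<alpha> ^ (Suc n + l) + \<beta> ^ (Suc n + l))"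
  by (simp add: xseq_def)

lemma xseq_sum: "xseq \<delta> \<alpha> \<beta> l n = \<delta> + (\<Sum>i<n. \<alpha> ^ (Suc i + l) + \<beta> ^ (Suc i + l))"
  by (induction n) (simp_all add: xseq_def)

lemma xseq_facts:
  assumes pos: "0 < \<alpha>" "\<alpha> < \<beta>" "\<beta> < 1"
    and sm: "(\<lambda>i. \<alpha> ^ (Suc i + l) + \<beta> ^ (Suc i + l)) sums (a - \<delta>)"
  shows "strict_mono (xseq \<delta> \<alpha> \<beta> l)"
    and "xseq \<delta> \<alpha> \<beta> l 0 = \<delta>"
    and "xseq \<delta> \<alpha> \<beta> l \<longlonglongrightarrow> a"
    and "\<And>n. xseq \<delta> \<alpha> \<beta> l n < a"
    and "\<And>n. a - xseq \<delta> \<alpha> \<beta> l n \<le> 2 * \<beta> ^ n / (1 - \<beta>)"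
proof -
  define t where "t = (\<lambda>i. \<alpha> ^ (Suc i + l) + \<beta> ^ (Suc i + l))"
  have tpos: "t i > 0" for i using pos by (simp add: t_def add_pos_pos)
  show "strict_mono (xseq \<delta> \<alpha> \<beta> l)"
    by (rule strict_monoI_Suc) (use tpos in \<open>simp add: xseq_Suc t_def\<close>)
  show "xseq \<delta> \<alpha> \<beta> l 0 = \<delta>" by (simp add: xseq_def)
  have xs: "xseq \<delta> \<alpha> \<beta> l n = \<delta> + (\<Sum>i<n. t i)" for n by (simp add: xseq_sum t_def)
  have sm': "t sums (a - \<delta>)" unfolding t_def by (rule sm)
  hence "(\<lambda>n. \<Sum>i<n. t i) \<longlonglongrightarrow> a - \<delta>" by (simp add: sums_def)
  hence "(\<lambda>n. \<delta> + (\<Sum>i<n. t i)) \<longlonglongrightarrow> \<delta> + (a - \<delta>)" by (intro tendsto_add) auto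
  moreover have "xseq \<delta> \<alpha> \<beta> l = (\<lambda>n. \<delta> + (\<Sum>i<n. t i))" using xs by (intro ext) simp
  ultimately show "xseq \<delta> \<alpha> \<beta> l \<longlonglongrightarrow> a" by simp
  fix n
  have tl: "(\<lambda>i. t (i + n)) sums (a - \<delta> - (\<Sum>i<n. t i))" by (rule sums_split_initial_segment[OF sm'])
  hence "a - \<delta> - (\<Sum>i<n. t i) > 0"
  proof -
    have "0 < suminf (\<lambda>i. t (i + n))" using tl tpos by (intro suminf_pos) (auto dest: sums_summable)
    thus ?thesis using tl by (simp add: sums_unique[symmetric])
  qed
  thus "xseq \<delta> \<alpha> \<beta> l n < a" by (simp add: xs)
  have g: "(\<lambda>i. 2 * \<beta> ^ n * \<beta> ^ i) sums (2 * \<beta> ^ n * (1 / (1 - \<beta>)))"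
    using pos by (intro sums_mult geometric_sums) auto
  have "t (i + n) \<le> 2 * \<beta> ^ n * \<beta> ^ i" for i
  proof -
    have h1: "\<alpha> ^ (Suc (i+n) + l) \<le> \<beta> ^ (Suc (i+n) + l)" using pos by (intro power_mono) auto
    have h2: "\<beta> ^ (Suc (i+n) + l) \<le> \<beta> ^ (i + n)" using pos by (intro power_decreasing) auto
    have "t (i+n) = \<alpha> ^ (Suc (i+n) + l) + \<beta> ^ (Suc (i+n) + l)" by (simp only: t_def)
    also have "\<dots> \<le> 2 * \<beta> ^ (i+n)" using h1 h2 by linarith
    also have "\<dots> = 2 * \<beta> ^ n * \<beta> ^ i" by (simp add: power_add)
    finally show ?thesis .
  qed
  hence "a - \<delta> - (\<Sum>i<n. t i) \<le> 2 * \<beta> ^ n * (1 / (1 - \<beta>))"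
    by (intro sums_le[OF _ tl g]) auto
  thus "a - xseq \<delta> \<alpha> \<beta> l n \<le> 2 * \<beta> ^ n / (1 - \<beta>)" by (simp add: xs)
qed

lemma the_interval:
  fixes x :: "nat \<Rightarrow> real"
  assumes "strict_mono x" "x k \<le> r" "r < x (Suc k)"
  shows "(THE n. x n \<le> r \<and> r < x (Suc n)) = k"
proof (rule the_equality)
  show "x k \<le> r \<and> r < x (Suc k)" using assms by auto
  fix n assume n: "x n \<le> r \<and> r < x (Suc n)"
  show "n = k"
  proof (rule ccontr)
    assume "n \<noteq> k"
    then consider "Suc n \<le> k" | "Suc k \<le> n" by linarith
    thus False
    proof cases
      case 1 then have "x (Suc n) \<le> x k" using assms(1) by (simp add: strict_mono_less_eq)
      thus False using n assms by linarith
    next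
      case 2 then have "x (Suc k) \<le> x n" using assms(1) by (simp add: strict_mono_less_eq)
      thus False using n assms by linarith
    qed
  qed
qed

lemma find_interval:
  fixes x :: "nat \<Rightarrow> real"
  assumes "strict_mono x" "x \<longlonglongrightarrow> a" "x 0 \<le> r" "r < a"
  shows "\<exists>k. x k \<le> r \<and> r < x (Suc k)"
proof -
  have "eventually (\<lambda>k. r < x k) sequentially" using assms(2,4) by (rule order_tendstoD)
  then obtain k0 where k0: "r < x k0" by (auto simp: eventually_sequentially)
  define k1 where "k1 = (LEAST k. r < x k)"
  have k1: "r < x k1" unfolding k1_def using k0 by (rule LeastI[of "\<lambda>k. r < x k" k0])
  have "k1 \<noteq> 0"
  proof
    assume "k1 = 0" with k1 assms(3) show False by simp
  qed
  then obtain k where k: "k1 = Suc k" by (cases k1) auto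
  have "\<not> r < x k"
  proof
    assume "r < x k"
    hence "k1 \<le> k" unfolding k1_def by (rule Least_le)
    thus False using k by simp
  qed
  thus ?thesis using k1 k by (intro exI[of _ k]) auto
qed

lemma m_bounds:
  fixes m :: "real \<Rightarrow> real"
  assumes pos: "0 < \<delta>" "\<delta> < a" "0 < h" "h < \<alpha>" "\<alpha> < \<beta>" "\<beta> < 1" "1 < \<nu>"
    and sm: "(\<lambda>i. \<alpha> ^ (Suc i + l) + \<beta> ^ (Suc i + l)) sums (a - \<delta>)"
    and ge: "\<forall>r\<in>{\<delta>..a}. m r \<ge> mtilde a b \<delta> h \<alpha> \<beta> \<nu> l r"
    and ma: "m a = 0"
  shows "\<And>r. r \<in> {yseq \<delta> \<alpha> \<beta> l n ..< xseq \<delta> \<alpha> \<beta> l (Suc n)} \<Longrightarrow> \<nu> * h ^ n \<le> m r"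
    and "\<And>r. r \<in> {yseq \<delta> \<alpha> \<beta> l n .. a} \<Longrightarrow> - (h ^ Suc n) \<le> m r"
proof -
  let ?x = "xseq \<delta> \<alpha> \<beta> l" and ?y = "yseq \<delta> \<alpha> \<beta> l"
  have a0: "0 < \<alpha>" using pos by linarith
  note xf = xseq_facts[OF a0 pos(5,6) sm]
  have ev: "mtilde a b \<delta> h \<alpha> \<beta> \<nu> l r = (if r < ?y k then - (h ^ k) else \<nu> * h ^ k)"
    if "?x k \<le> r" "r < ?x (Suc k)" for r k
  proof -
    have "?x (Suc k) < a" by (rule xf(4))
    moreover have "\<delta> \<le> ?x k" using xf(1,2) by (metis le0 strict_mono_less_eq)
    ultimately have "r \<in> {\<delta>..<a}" using that by auto
    thus ?thesis using the_interval[OF xf(1) that] by (simp add: mtilde_def mtilde_left_def Let_def)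
  qed
  have ylt: "?y k < ?x (Suc k)" for k using pos
    by (simp add: yseq_def xseq_Suc)
  have xley: "?x k \<le> ?y k" for k using a0 by (simp add: yseq_def)
  have xge: "\<delta> \<le> ?x k" for k using xf(1,2) by (metis le0 strict_mono_less_eq)
  {
    fix r assume r: "r \<in> {?y n ..< ?x (Suc n)}"
    have r2: "?x n \<le> r" "r < ?x (Suc n)" using r xley[of n] by auto
    have "r \<le> a" using r xf(4)[of "Suc n"] by auto
    hence "m r \<ge> mtilde a b \<delta> h \<alpha> \<beta> \<nu> l r" using ge r2 xge[of n] by auto
    thus "\<nu> * h ^ n \<le> m r" using ev[OF r2] r by auto
  }
  {
    fix r assume r: "r \<in> {?y n .. a}"
    show "- (h ^ Suc n) \<le> m r"
    proof (cases "r = a")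
      case True thus ?thesis using ma pos by simp
    next
      case False
      hence ra: "r < a" using r by auto
      have "?x 0 \<le> r" using r xge[of n] xley[of n] xf(2) by auto
      then obtain k where k: "?x k \<le> r" "r < ?x (Suc k)" using find_interval[OF xf(1) xf(3) _ ra] by blast
      have "n \<le> k"
      proof (rule ccontr)
        assume "\<not> n \<le> k" hence "Suc k \<le> n" by simp
        hence "?x (Suc k) \<le> ?x n" using xf(1) by (simp add: strict_mono_less_eq)
        thus False using k r xley[of n] by auto
      qed
      have "m r \<ge> mtilde a b \<delta> h \<alpha> \<beta> \<nu> l r" using ge r xge[of n] xley[of n] by auto
      moreover have "mtilde a b \<delta> h \<alpha> \<beta> \<nu> l r \<ge> - (h ^ Suc n)"
      proof (cases "k = n")
        case True
        hence "\<not> r < ?y k" using r by auto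
        moreover have "0 \<le> \<nu> * h ^ k" "0 \<le> h ^ Suc n" using pos by simp_all
        ultimately show ?thesis using ev[OF k] by auto
      next
        case False
        hence "Suc n \<le> k" using \<open>n \<le> k\<close> by simp
        hence "h ^ k \<le> h ^ Suc n" using pos by (intro power_decreasing) auto
        moreover have "0 \<le> \<nu> * h ^ k" "0 \<le> h ^ Suc n" using pos by auto
        ultimately show ?thesis using ev[OF k] by (simp del: power_Suc)
      qed
      ultimately show ?thesis by linarith
    qed
  }
qed

lemma min_point:
  fixes f W :: "real \<Rightarrow> real"
  assumes uv: "u < v" and fc: "continuous_on {u..v} f"
    and W: "\<And>r. r \<in> {u..v} \<Longrightarrow> W0 \<le> W r" and W0: "0 < W0"
    and int: "(\<lambda>r. W r * (f r)\<^sup>2) integrable_on {u..v}"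
    and I: "integral {u..v} (\<lambda>r. W r * (f r)\<^sup>2) \<le> I"
  shows "\<exists>p\<in>{u..v}. (f p)\<^sup>2 \<le> I / (W0 * (v - u))"
proof -
  have "continuous_on {u..v} (\<lambda>r. (f r)\<^sup>2)" by (intro continuous_intros fc)
  then obtain p where p: "p \<in> {u..v}" "\<And>y. y \<in> {u..v} \<Longrightarrow> (f p)\<^sup>2 \<le> (f y)\<^sup>2"
    using continuous_attains_inf[of "{u..v}" "\<lambda>r. (f r)\<^sup>2"] uv by auto
  have "integral {u..v} (\<lambda>r. W0 * (f p)\<^sup>2) \<le> integral {u..v} (\<lambda>r. W r * (f r)\<^sup>2)"
  proof (rule integral_le[OF _ int])
    show "(\<lambda>r. W0 * (f p)\<^sup>2) integrable_on {u..v}" by (intro integrable_continuous_interval continuous_intros)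
    fix r assume r: "r \<in> {u..v}"
    show "W0 * (f p)\<^sup>2 \<le> W r * (f r)\<^sup>2"
      using W[OF r] p(2)[OF r] W0 by (meson less_le_trans less_imp_le mult_mono zero_le_power2)
  qed
  hence "W0 * (f p)\<^sup>2 * (v - u) \<le> I" using I uv by (simp add: mult_ac)
  hence "(f p)\<^sup>2 \<le> I / (W0 * (v - u))" using W0 uv by (simp add: field_simps)
  thus ?thesis using p(1) by blast
qed

lemma cs_bound:
  fixes f f' w :: "real \<Rightarrow> real"
  assumes uv: "u \<le> v"
    and der: "\<And>x. x \<in> {u..v} \<Longrightarrow> (f has_real_derivative f' x) (at x within {u..v})"
    and f'c: "continuous_on {u..v} f'" and wc: "continuous_on {u..v} w"
    and wpos: "\<And>x. x \<in> {u..v} \<Longrightarrow> 0 < w x"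
    and B: "\<And>x. x \<in> {u..v} \<Longrightarrow> 1 / w x \<le> B"
    and A: "integral {u..v} (\<lambda>x. w x * (f' x)\<^sup>2) \<le> A"
    and lm: "0 < lm"
  shows "\<bar>f v - f u\<bar> \<le> (lm * A + B * (v - u) / lm) / 2"
proof -
  have "(f' has_integral (f v - f u)) {u..v}"
    by (rule fundamental_theorem_of_calculus[OF uv]) (use der in \<open>auto simp: has_real_derivative_iff_has_vector_derivative\<close>)
  hence eq: "f v - f u = integral {u..v} f'" by (simp add: integral_unique)
  have c1: "continuous_on {u..v} (\<lambda>x. w x * (f' x)\<^sup>2)" by (intro continuous_intros wc f'c)
  have c2: "continuous_on {u..v} (\<lambda>x. 1 / w x)" using wpos by (intro continuous_intros wc) (metis less_irrefl)
  have i1: "(\<lambda>x. w x * (f' x)\<^sup>2) integrable_on {u..v}" by (rule integrable_continuous_interval[OF c1])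
  have i2: "(\<lambda>x. 1 / w x) integrable_on {u..v}" by (rule integrable_continuous_interval[OF c2])
  have i3: "f' integrable_on {u..v}" by (rule integrable_continuous_interval[OF f'c])
  have i4: "(\<lambda>x. \<bar>f' x\<bar>) integrable_on {u..v}" by (rule integrable_continuous_interval) (intro continuous_intros f'c)
  have pw: "\<bar>f' x\<bar> \<le> (lm / 2) * (w x * (f' x)\<^sup>2) + (1 / (2 * lm)) * (1 / w x)" if x: "x \<in> {u..v}" for x
  proof -
    define q where "q = lm * w x"
    have q: "q > 0" using wpos[OF x] lm by (simp add: q_def)
    have "0 \<le> (q * \<bar>f' x\<bar> - 1)\<^sup>2 / q" using q by simp
    also have "(q * \<bar>f' x\<bar> - 1)\<^sup>2 / q = q * (f' x)\<^sup>2 - 2 * \<bar>f' x\<bar> + 1 / q"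
      using q by (simp add: field_simps power2_eq_square)
    finally have "2 * \<bar>f' x\<bar> \<le> q * (f' x)\<^sup>2 + 1 / q" by simp
    thus ?thesis using q lm wpos[OF x] by (simp add: q_def field_simps)
  qed
  define I1 where "I1 = integral {u..v} (\<lambda>x. w x * (f' x)\<^sup>2)"
  define I2 where "I2 = integral {u..v} (\<lambda>x. 1 / w x)"
  have h1: "((\<lambda>x. w x * (f' x)\<^sup>2) has_integral I1) {u..v}" using i1 by (simp add: I1_def integrable_integral)
  have h2: "((\<lambda>x. 1 / w x) has_integral I2) {u..v}" using i2 by (simp add: I2_def integrable_integral)
  have h3: "((\<lambda>x. (lm / 2) * (w x * (f' x)\<^sup>2) + (1 / (2 * lm)) * (1 / w x)) has_integral
       ((lm / 2) * I1 + (1 / (2 * lm)) * I2)) {u..v}"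
    using has_integral_add[OF has_integral_cmul[OF h1, of "lm/2"] has_integral_cmul[OF h2, of "1/(2*lm)"]] by simp
  have "I2 \<le> integral {u..v} (\<lambda>x. B)"
    unfolding I2_def by (rule integral_le[OF i2]) (use B in auto)
  also have "integral {u..v} (\<lambda>x. B) = B * (v - u)" using uv by simp
  finally have I2: "I2 \<le> B * (v - u)" .
  have "\<bar>f v - f u\<bar> \<le> integral {u..v} (\<lambda>x. \<bar>f' x\<bar>)"
    unfolding eq using integral_norm_bound_integral[OF i3 i4] by simp
  also have "\<dots> \<le> (lm / 2) * I1 + (1 / (2 * lm)) * I2"
    using has_integral_le[OF integrable_integral[OF i4] h3] pw by auto
  also have "\<dots> \<le> (lm / 2) * A + (1 / (2 * lm)) * (B * (v - u))"
    using A I2 lm unfolding I1_def by (intro add_mono mult_left_mono) auto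
  also have "\<dots> = (lm * A + B * (v - u) / lm) / 2" using lm by (simp add: field_simps)
  finally show ?thesis .
qed

lemma bump_deriv:
  fixes a b x :: real
  assumes ab: "a < b"
  shows "((\<lambda>r. if r \<in> {a..b} then ((r-a)*(b-r))\<^sup>2 else 0) has_real_derivative
           (if x \<in> {a..b} then 2*((x-a)*(b-x))*((b-x)-(x-a)) else 0)) (at x)"
proof -
  have pd: "((\<lambda>r. ((r-a)*(b-r))\<^sup>2) has_vector_derivative (2*((y-a)*(b-y))*((b-y)-(y-a)))) (at y within U)" for y U
  proof -
    have "((\<lambda>r. ((r-a)*(b-r))\<^sup>2) has_real_derivative (2*((y-a)*(b-y))*((b-y)-(y-a)))) (at y within U)"
      by (rule derivative_eq_intros refl | simp add: algebra_simps)+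
    thus ?thesis by (simp add: has_real_derivative_iff_has_vector_derivative)
  qed
  have cl: "closure {a..b} \<inter> closure (- {a..b}) \<subseteq> {a, b}"
    by (auto simp: closure_complement)
  have "((\<lambda>r. if r \<in> {a..b} then ((r-a)*(b-r))\<^sup>2 else 0) has_vector_derivative
           (if x \<in> {a..b} then 2*((x-a)*(b-x))*((b-x)-(x-a)) else 0)) (at x within UNIV)"
  proof (rule has_vector_derivative_If_within_closures[where T = "- {a..b}"])
    show "x \<in> {a..b} \<union> - {a..b}" by simp
    show "UNIV = {a..b} \<union> - {a..b}" by auto
  next
    show "((\<lambda>r. ((r-a)*(b-r))\<^sup>2) has_vector_derivative (2*((x-a)*(b-x))*((b-x)-(x-a))))
       (at x within {a..b} \<union> (closure {a..b} \<inter> closure (- {a..b})))" by (rule pd)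
  next
    show "((\<lambda>r. 0::real) has_vector_derivative 0) (at x within - {a..b} \<union> (closure {a..b} \<inter> closure (- {a..b})))"
      by (rule has_vector_derivative_const)
  next
    assume "x \<in> closure {a..b}" "x \<in> closure (- {a..b})"
    hence "x = a \<or> x = b" using cl by auto
    thus "((x-a)*(b-x))\<^sup>2 = 0" "2*((x-a)*(b-x))*((b-x)-(x-a)) = 0" by auto
  qed
  thus ?thesis by (simp add: has_real_derivative_iff_has_vector_derivative)
qed

lemma energy_nonneg:
  assumes "\<forall>r\<in>{0..1}. c r > 0"
  shows "0 \<le> energy d m c t \<phi> \<phi>'"
proof -
  have "0 \<le> r ^ (d - 1) * exp (2 * t * m r) * ((\<phi>' r)\<^sup>2 + c r * (\<phi> r)\<^sup>2)" if "r \<in> {0..1}" for r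
    using assms that by (intro mult_nonneg_nonneg add_nonneg_nonneg) (auto intro: less_imp_le)
  thus ?thesis unfolding energy_def
    by (cases "(\<lambda>r. r ^ (d - 1) * exp (2 * t * m r) * ((\<phi>' r)\<^sup>2 + c r * (\<phi> r)\<^sup>2)) integrable_on {0..1}")
       (auto intro: integral_nonneg simp: not_integrable_integral)
qed

lemma lam_le:
  assumes "\<forall>r\<in>{0..1}. c r > 0" "C1_on {0..1} \<phi> \<phi>'" "mass d m t \<phi> = 1"
  shows "lam d m c t \<le> energy d m c t \<phi> \<phi>'"
  unfolding lam_def
proof (rule cInf_lower)
  show "energy d m c t \<phi> \<phi>' \<in> {energy d m c t \<phi> \<phi>' |\<phi> \<phi>'. C1_on {0..1} \<phi> \<phi>' \<and> mass d m t \<phi> = 1}"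
    using assms by blast
  show "bdd_below {energy d m c t \<phi> \<phi>' |\<phi> \<phi>'. C1_on {0..1} \<phi> \<phi>' \<and> mass d m t \<phi> = 1}"
    by (rule bdd_belowI[of _ 0]) (use energy_nonneg[OF assms(1)] in auto)
qed

lemma lam_bounded:
  fixes d :: nat and m c :: "real \<Rightarrow> real" and a b :: real
  assumes ab: "0 < a" "a < b" "b < 1"
    and mz: "\<forall>r\<in>{a..b}. m r = 0"
    and cpos: "\<forall>r\<in>{0..1}. c r > 0"
  shows "\<exists>L. \<forall>t. lam d m c t \<le> L"
proof -
  define p0 where "p0 = (\<lambda>r::real. if r \<in> {a..b} then ((r-a)*(b-r))\<^sup>2 else 0)"
  define p1 where "p1 = (\<lambda>x::real. if x \<in> {a..b} then 2*((x-a)*(b-x))*((b-x)-(x-a)) else 0)"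
  have der: "(p0 has_real_derivative p1 x) (at x)" for x
    unfolding p0_def p1_def by (rule bump_deriv[OF ab(2)])
  have p0c: "continuous_on {0..1} p0"
    by (rule continuous_at_imp_continuous_on) (use der DERIV_isCont in blast)
  have "p1 = (\<lambda>x. 2*((max a (min b x)-a)*(b-max a (min b x)))*((b-max a (min b x))-(max a (min b x)-a)))"
  proof
    fix x :: real
    consider "x < a" | "x \<in> {a..b}" | "b < x" by force
    thus "p1 x = 2*((max a (min b x)-a)*(b-max a (min b x)))*((b-max a (min b x))-(max a (min b x)-a))"
    proof cases
      case 1
      hence "max a (min b x) = a" using ab by simp
      thus ?thesis using 1 by (simp add: p1_def)
    next
      case 2
      hence "max a (min b x) = x" by simp
      thus ?thesis using 2 by (simp add: p1_def)
    next
      case 3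
      hence "max a (min b x) = b" using ab by simp
      thus ?thesis using 3 by (simp add: p1_def)
    qed
  qed
  hence p1c: "continuous_on {0..1} p1" by (simp; intro continuous_intros)
  define F where "F = (\<lambda>r::real. r ^ (d - 1) * (p0 r)\<^sup>2)"
  define M where "M = integral {0..1} F"
  have Fc: "continuous_on {0..1} F" unfolding F_def by (intro continuous_intros p0c)
  have Fnn: "0 \<le> F r" if "r \<in> {0..1}" for r using that by (simp add: F_def)
  have Fi: "F integrable_on {0..1}" by (rule integrable_continuous_interval[OF Fc])
  have Mpos: "M > 0"
  proof (rule ccontr)
    assume "\<not> M > 0"
    moreover have "M \<ge> 0" unfolding M_def by (rule integral_nonneg[OF Fi]) (use Fnn in auto)
    ultimately have "M = 0" by simp
    hence "(F has_integral 0) (cbox 0 1)" using Fi by (metis M_def cbox_interval integrable_integral)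
    hence "F ((a+b)/2) = 0"
      by (intro has_integral_0_cbox_imp_0[of 0 1 F]) (use Fc Fnn ab in \<open>auto simp: cbox_interval box_real\<close>)
    moreover have "F ((a+b)/2) > 0" using ab by (simp add: F_def p0_def)
    ultimately show False by simp
  qed
  define sM where "sM = sqrt M"
  have sM: "sM > 0" "sM\<^sup>2 = M" using Mpos by (auto simp: sM_def)
  define q0 where "q0 = (\<lambda>r. p0 r / sM)"
  define q1 where "q1 = (\<lambda>r. p1 r / sM)"
  have C1: "C1_on {0..1} q0 q1"
    unfolding C1_on_def q0_def q1_def
  proof
    show "\<forall>x\<in>{0..1}. ((\<lambda>r. p0 r / sM) has_real_derivative p1 x / sM) (at x within {0..1})"
      using der by (metis DERIV_cdivide has_field_derivative_at_within)
    show "continuous_on {0..1} (\<lambda>r. p1 r / sM)" using sM by (intro continuous_intros p1c) auto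
  qed
  have off: "p0 r = 0 \<and> p1 r = 0" if "r \<notin> {a..b}" for r using that unfolding p0_def p1_def by auto
  have sq: "(z / sM)\<^sup>2 = (1 / M) * z\<^sup>2" for z using sM by (simp add: power_divide)
  have mass_eq: "r ^ (d - 1) * exp (2 * t * m r) * (q0 r)\<^sup>2 = (1 / M) * F r" for t r
  proof (cases "r \<in> {a..b}")
    case True thus ?thesis using mz by (simp add: q0_def F_def sq)
  next
    case False thus ?thesis using off[OF False] by (simp add: q0_def F_def)
  qed
  have mass1: "mass d m t q0 = 1" for t
  proof -
    have "mass d m t q0 = integral {0..1} (\<lambda>r. (1 / M) * F r)" unfolding mass_def mass_eq ..
    also have "\<dots> = (1 / M) * M" using integral_cmul[of "{0..1}" "1/M" F] by (simp add: M_def)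
    finally show ?thesis using Mpos by simp
  qed
  define G where "G = (\<lambda>r::real. r ^ (d - 1) * ((p1 r)\<^sup>2 + c r * (p0 r)\<^sup>2))"
  have en_eq: "r ^ (d - 1) * exp (2 * t * m r) * ((q1 r)\<^sup>2 + c r * (q0 r)\<^sup>2) = (1 / M) * G r" for t r
  proof (cases "r \<in> {a..b}")
    case True thus ?thesis using mz by (simp add: q0_def q1_def G_def sq algebra_simps)
  next
    case False thus ?thesis using off[OF False] by (simp add: q0_def q1_def G_def)
  qed
  have "energy d m c t q0 q1 = (1 / M) * integral {0..1} G" for t
    unfolding energy_def en_eq using integral_cmul[of "{0..1}" "1/M" G] by simp
  hence "lam d m c t \<le> (1 / M) * integral {0..1} G" for t
    using lam_le[OF cpos C1 mass1] by metis
  thus ?thesis by blast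
qed

lemma side_est:
  fixes \<phi> \<phi>' m c :: "real \<Rightarrow> real" and d :: nat
  assumes C1: "C1_on {0..1} \<phi> \<phi>'"
    and mc: "continuous_on {0..1} m" and cc: "continuous_on {0..1} c"
    and cpos: "\<forall>r\<in>{0..1}. c r > 0"
    and s: "s > 0" and \<delta>: "0 < \<delta>"
    and mass1: "mass d m s \<phi> = 1"
    and en: "energy d m c s \<phi> \<phi>' \<le> Lam"
    and uv: "u < v" "\<delta> \<le> u" "v \<le> 1"
    and mP: "\<And>r. r \<in> {u..v} \<Longrightarrow> P \<le> m r"
    and seg: "\<And>p. p \<in> {u..v} \<Longrightarrow> {min p e..max p e} \<subseteq> {\<delta>..1}"
    and mQ: "\<And>p r. p \<in> {u..v} \<Longrightarrow> r \<in> {min p e..max p e} \<Longrightarrow> - Q \<le> m r"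
    and D: "\<And>p. p \<in> {u..v} \<Longrightarrow> \<bar>p - e\<bar> \<le> D"
    and lm: "0 < lm"
  shows "\<phi> e \<le> sqrt (1 / (\<delta> ^ (d - 1) * exp (2 * s * P) * (v - u)))
                 + (lm * Lam + exp (2 * s * Q) / \<delta> ^ (d - 1) * D / lm) / 2"
proof -
  have der: "\<And>x. x \<in> {0..1} \<Longrightarrow> (\<phi> has_real_derivative \<phi>' x) (at x within {0..1})"
    and \<phi>'c: "continuous_on {0..1} \<phi>'" using C1 by (auto simp: C1_on_def)
  have \<phi>c: "continuous_on {0..1} \<phi>" by (rule DERIV_continuous_on[OF der])
  define W where "W = (\<lambda>r. r ^ (d - 1) * exp (2 * s * m r))"
  have Wc: "continuous_on {0..1} W" unfolding W_def by (intro continuous_intros mc)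
  have Wnn: "0 \<le> W r" if "r \<in> {0..1}" for r using that by (simp add: W_def)
  have dpos: "0 < \<delta> ^ (d - 1)" using \<delta> by simp
  have i_mass: "(\<lambda>r. W r * (\<phi> r)\<^sup>2) integrable_on {0..1}"
    by (intro integrable_continuous_interval continuous_intros Wc \<phi>c)
  have sub1: "{u..v} \<subseteq> {0..1}" using uv \<delta> by auto
  have "integral {u..v} (\<lambda>r. W r * (\<phi> r)\<^sup>2) \<le> integral {0..1} (\<lambda>r. W r * (\<phi> r)\<^sup>2)"
    by (rule integral_subset_le[OF sub1 integrable_on_subinterval[OF i_mass] i_mass])
       (use sub1 Wnn in auto)
  also have "\<dots> = 1" using mass1 by (simp add: mass_def W_def)
  finally have Im: "integral {u..v} (\<lambda>r. W r * (\<phi> r)\<^sup>2) \<le> 1" .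
  have W0: "\<delta> ^ (d - 1) * exp (2 * s * P) \<le> W r" if r: "r \<in> {u..v}" for r
  proof -
    have "\<delta> ^ (d - 1) \<le> r ^ (d - 1)" using r uv \<delta> by (intro power_mono) auto
    moreover have "exp (2 * s * P) \<le> exp (2 * s * m r)" using mP[OF r] s by simp
    ultimately show ?thesis unfolding W_def using dpos by (intro mult_mono) auto
  qed
  obtain p where p: "p \<in> {u..v}" and p2: "(\<phi> p)\<^sup>2 \<le> 1 / (\<delta> ^ (d - 1) * exp (2 * s * P) * (v - u))"
    using min_point[OF uv(1) continuous_on_subset[OF \<phi>c sub1] W0 _ integrable_on_subinterval[OF i_mass sub1] Im] dpos
    by auto
  have p1: "\<phi> p \<le> sqrt (1 / (\<delta> ^ (d - 1) * exp (2 * s * P) * (v - u)))"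
    using p2 real_le_rsqrt by blast
  define x1 where "x1 = min p e"
  define x2 where "x2 = max p e"
  have sub2: "{x1..x2} \<subseteq> {0..1}" using seg[OF p] \<delta> unfolding x1_def x2_def by auto
  have x12: "x1 \<le> x2" by (simp add: x1_def x2_def)
  have i_en: "(\<lambda>r. W r * ((\<phi>' r)\<^sup>2 + c r * (\<phi> r)\<^sup>2)) integrable_on {0..1}"
    by (intro integrable_continuous_interval continuous_intros Wc \<phi>c \<phi>'c cc)
  have i_en2: "(\<lambda>r. W r * (\<phi>' r)\<^sup>2) integrable_on {0..1}"
    by (intro integrable_continuous_interval continuous_intros Wc \<phi>'c)
  have "integral {x1..x2} (\<lambda>r. W r * (\<phi>' r)\<^sup>2) \<le> integral {x1..x2} (\<lambda>r. W r * ((\<phi>' r)\<^sup>2 + c r * (\<phi> r)\<^sup>2))"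
  proof (rule integral_le[OF integrable_on_subinterval[OF i_en2 sub2] integrable_on_subinterval[OF i_en sub2]])
    fix r assume r: "r \<in> {x1..x2}"
    hence "r \<in> {0..1}" using sub2 by auto
    hence "0 \<le> W r * (c r * (\<phi> r)\<^sup>2)" using Wnn cpos by (simp add: less_imp_le)
    thus "W r * (\<phi>' r)\<^sup>2 \<le> W r * ((\<phi>' r)\<^sup>2 + c r * (\<phi> r)\<^sup>2)" by (simp add: algebra_simps)
  qed
  also have "\<dots> \<le> integral {0..1} (\<lambda>r. W r * ((\<phi>' r)\<^sup>2 + c r * (\<phi> r)\<^sup>2))"
  proof (rule integral_subset_le[OF sub2 integrable_on_subinterval[OF i_en sub2] i_en])
    show "\<forall>x\<in>{0..1}. 0 \<le> W x * ((\<phi>' x)\<^sup>2 + c x * (\<phi> x)\<^sup>2)"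
    proof
      fix x :: real assume x: "x \<in> {0..1}"
      hence "0 \<le> c x * (\<phi> x)\<^sup>2" using cpos by (simp add: less_imp_le)
      hence "0 \<le> (\<phi>' x)\<^sup>2 + c x * (\<phi> x)\<^sup>2" by (simp add: add_nonneg_nonneg)
      thus "0 \<le> W x * ((\<phi>' x)\<^sup>2 + c x * (\<phi> x)\<^sup>2)" using Wnn[OF x] by simp
    qed
  qed
  also have "\<dots> \<le> Lam" using en by (simp add: energy_def W_def)
  finally have Ie: "integral {x1..x2} (\<lambda>r. W r * (\<phi>' r)\<^sup>2) \<le> Lam" .
  have wpos: "0 < W r" if "r \<in> {x1..x2}" for r
  proof -
    have "r \<in> {\<delta>..1}" using that seg[OF p] unfolding x1_def x2_def by auto
    thus ?thesis using \<delta> by (simp add: W_def)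
  qed
  have wB: "1 / W r \<le> exp (2 * s * Q) / \<delta> ^ (d - 1)" if r: "r \<in> {x1..x2}" for r
  proof -
    have rr: "r \<in> {\<delta>..1}" using that seg[OF p] unfolding x1_def x2_def by auto
    have "\<delta> ^ (d - 1) \<le> r ^ (d - 1)" using rr \<delta> by (intro power_mono) auto
    moreover have "exp (- 2 * s * Q) \<le> exp (2 * s * m r)"
    proof -
      have "- Q \<le> m r" using mQ[OF p, of r] r unfolding x1_def x2_def by simp
      hence "(2 * s) * (- Q) \<le> (2 * s) * m r" using s by (intro mult_left_mono) auto
      thus ?thesis by simp
    qed
    ultimately have "\<delta> ^ (d - 1) * exp (- 2 * s * Q) \<le> W r" unfolding W_def using dpos by (intro mult_mono) auto
    hence "1 / W r \<le> 1 / (\<delta> ^ (d - 1) * exp (- 2 * s * Q))" using dpos wpos[OF r] by (intro divide_left_mono) auto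
    also have "\<dots> = exp (2 * s * Q) / \<delta> ^ (d - 1)" by (simp add: exp_minus field_simps)
    finally show ?thesis .
  qed
  have derx: "(\<phi> has_real_derivative \<phi>' x) (at x within {x1..x2})" if "x \<in> {x1..x2}" for x
    using der[of x] that sub2 by (auto intro: DERIV_subset)
  have cs: "\<bar>\<phi> x2 - \<phi> x1\<bar> \<le> (lm * Lam + exp (2 * s * Q) / \<delta> ^ (d - 1) * (x2 - x1) / lm) / 2"
    by (rule cs_bound[OF x12 derx continuous_on_subset[OF \<phi>'c sub2] continuous_on_subset[OF Wc sub2] wpos wB Ie lm])
  have "x2 - x1 = \<bar>p - e\<bar>" by (simp add: x1_def x2_def)
  hence "x2 - x1 \<le> D" using D[OF p] by simp
  hence X: "exp (2 * s * Q) / \<delta> ^ (d - 1) * (x2 - x1) / lm \<le> exp (2 * s * Q) / \<delta> ^ (d - 1) * D / lm"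
    using lm dpos by (intro divide_right_mono mult_left_mono) auto
  have "(lm * Lam + exp (2 * s * Q) / \<delta> ^ (d - 1) * (x2 - x1) / lm) / 2 \<le> (lm * Lam + exp (2 * s * Q) / \<delta> ^ (d - 1) * D / lm) / 2"
    using divide_right_mono[OF add_left_mono[OF X, of "lm * Lam"], of 2] by simp
  with cs have cs2: "\<bar>\<phi> x2 - \<phi> x1\<bar> \<le> (lm * Lam + exp (2 * s * Q) / \<delta> ^ (d - 1) * D / lm) / 2" by (rule order_trans)
  have "\<phi> e - \<phi> p \<le> \<bar>\<phi> x2 - \<phi> x1\<bar>" by (cases "p \<le> e") (auto simp: x1_def x2_def)
  thus ?thesis using p1 cs2 by linarith
qed

lemma choose_n_ex:
  fixes h Cc t :: real
  assumes h: "0 < h" "h < 1" and Cc: "0 < Cc"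
  shows "\<exists>n. t * h ^ n \<le> Cc * real n"
proof -
  have "(\<lambda>n. t * h ^ n) \<longlonglongrightarrow> t * 0" using h by (intro tendsto_mult tendsto_const LIMSEQ_power_zero) auto
  hence "eventually (\<lambda>n. t * h ^ n < Cc) sequentially" using Cc by (intro order_tendstoD) auto
  then obtain n0 where n0: "\<And>n. n \<ge> n0 \<Longrightarrow> t * h ^ n < Cc" by (auto simp: eventually_sequentially)
  have "Cc \<le> Cc * real (Suc n0)" using Cc by simp
  hence "t * h ^ (Suc n0) \<le> Cc * real (Suc n0)" using n0[of "Suc n0"] by simp
  thus ?thesis by blast
qed

lemma choose_n:
  fixes h Cc t :: real
  assumes h: "0 < h" "h < 1" and Cc: "0 < Cc" and t: "0 < t"
  defines "n \<equiv> LEAST n. t * h ^ n \<le> Cc * real n"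
  shows "1 \<le> n" "t * h ^ n \<le> Cc * real n" "h * Cc * (real n - 1) < t * h ^ n"
proof -
  obtain n0 where n0: "t * h ^ n0 \<le> Cc * real n0" using choose_n_ex[OF h Cc] by blast
  show hn: "t * h ^ n \<le> Cc * real n" unfolding n_def by (rule LeastI[of _ n0]) (rule n0)
  show "1 \<le> n"
  proof (rule ccontr)
    assume "\<not> 1 \<le> n" hence "n = 0" by simp
    thus False using hn t by simp
  qed
  then obtain k where k: "n = Suc k" by (cases n) auto
  have "\<not> t * h ^ k \<le> Cc * real k"
  proof
    assume "t * h ^ k \<le> Cc * real k"
    hence "n \<le> k" unfolding n_def by (rule Least_le)
    thus False using k by simp
  qed
  hence "Cc * real k < t * h ^ k" by simp
  hence "h * (Cc * real k) < h * (t * h ^ k)" using h by simp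
  thus "h * Cc * (real n - 1) < t * h ^ n" using k by (simp add: mult_ac)
qed

lemma choose_n_tendsto:
  fixes h Cc :: real
  assumes h: "0 < h" "h < 1" and Cc: "0 < Cc"
  shows "filterlim (\<lambda>t. LEAST n. t * h ^ n \<le> Cc * real n) at_top at_top"
  unfolding filterlim_at_top
proof
  fix Z :: nat
  have "eventually (\<lambda>t::real. t > max 0 (Cc * real Z / h ^ Z)) at_top" by (rule eventually_gt_at_top)
  thus "eventually (\<lambda>t. Z \<le> (LEAST n. t * h ^ n \<le> Cc * real n)) at_top"
  proof (rule eventually_mono)
    fix t :: real assume t: "max 0 (Cc * real Z / h ^ Z) < t"
    define n where "n = (LEAST n. t * h ^ n \<le> Cc * real n)"
    have tp: "0 < t" using t by simp
    have hn: "t * h ^ n \<le> Cc * real n" unfolding n_def using choose_n(2)[OF h Cc tp] by simp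
    show "Z \<le> n"
    proof (rule ccontr)
      assume "\<not> Z \<le> n" hence nZ: "n \<le> Z" by simp
      have hp: "0 < h ^ n" "0 < h ^ Z" using h by auto
      have "h ^ Z \<le> h ^ n" using h nZ by (intro power_decreasing) auto
      have "t \<le> Cc * real n / h ^ n" using hn hp by (simp add: field_simps)
      also have "\<dots> \<le> Cc * real Z / h ^ Z"
        using nZ hp Cc \<open>h ^ Z \<le> h ^ n\<close> by (intro frac_le mult_left_mono) auto
      finally show False using t by simp
    qed
  qed
qed

lemma exp_pow: "exp x ^ n = exp (real n * x)"
  by (simp add: exp_of_nat_mult)

lemma alg_A:
  fixes dd \<beta> L \<nu> \<kappa> K :: real and n l :: nat
  assumes dd: "0 < dd" and \<beta>: "\<beta> = exp (- L)" and \<nu>: "0 < \<nu>" and \<kappa>: "0 < \<kappa>"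
    and K: "\<kappa> * (real n - 1) < K"
  shows "1 / (dd * exp (2 * \<nu> * K) * (\<beta> ^ (Suc n + l) / 2))
     \<le> (2 * exp (2 * \<nu> * \<kappa>) / (dd * \<beta> ^ (Suc l))) * exp (L - 2 * \<nu> * \<kappa>) ^ n"
proof -
  have bp: "0 < \<beta>" using \<beta> by simp
  have "\<beta> ^ (Suc n + l) = \<beta> ^ Suc l * exp (- L) ^ n" using \<beta> by (simp add: power_add mult_ac)
  also have "exp (- L) ^ n = exp (- (real n * L))" by (simp add: exp_pow)
  finally have b1: "\<beta> ^ (Suc n + l) = \<beta> ^ Suc l * exp (- (real n * L))" .
  have "2 * \<nu> * (\<kappa> * (real n - 1)) \<le> 2 * \<nu> * K" using K \<nu> by (intro mult_left_mono) auto
  hence e1: "exp (- (2 * \<nu> * \<kappa>) + real n * (2 * \<nu> * \<kappa> - L)) \<le> exp (2 * \<nu> * K) * exp (- (real n * L))"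
    by (simp add: exp_add[symmetric] algebra_simps)
  have "dd * exp (2 * \<nu> * K) * (\<beta> ^ (Suc n + l) / 2) = (dd * \<beta> ^ Suc l / 2) * (exp (2 * \<nu> * K) * exp (- (real n * L)))"
    unfolding b1 by (simp add: mult_ac)
  also have "\<dots> \<ge> (dd * \<beta> ^ Suc l / 2) * exp (- (2 * \<nu> * \<kappa>) + real n * (2 * \<nu> * \<kappa> - L))"
    using e1 dd bp by (intro mult_left_mono) auto
  finally have den: "(dd * \<beta> ^ Suc l / 2) * exp (- (2 * \<nu> * \<kappa>) + real n * (2 * \<nu> * \<kappa> - L)) \<le> dd * exp (2 * \<nu> * K) * (\<beta> ^ (Suc n + l) / 2)" .
  have pos: "0 < (dd * \<beta> ^ Suc l / 2) * exp (- (2 * \<nu> * \<kappa>) + real n * (2 * \<nu> * \<kappa> - L))" using dd bp by simp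
  have "1 / (dd * exp (2 * \<nu> * K) * (\<beta> ^ (Suc n + l) / 2)) \<le> 1 / ((dd * \<beta> ^ Suc l / 2) * exp (- (2 * \<nu> * \<kappa>) + real n * (2 * \<nu> * \<kappa> - L)))"
    by (rule divide_left_mono[OF den]) (use pos den in auto)
  also have "\<dots> = (2 * exp (2 * \<nu> * \<kappa>) / (dd * \<beta> ^ (Suc l))) * exp (real n * (L - 2 * \<nu> * \<kappa>))"
  proof -
    have ex: "exp (2 * \<nu> * \<kappa>) * exp (real n * (L - 2 * \<nu> * \<kappa>)) * exp (- (2 * \<nu> * \<kappa>) + real n * (2 * \<nu> * \<kappa> - L)) = 1"
      by (simp add: exp_add[symmetric] algebra_simps)
    have "exp (- (2 * \<nu> * \<kappa>) + real n * (2 * \<nu> * \<kappa> - L)) > 0" by simp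
    thus ?thesis using dd bp ex by (simp add: field_simps)
  qed
  also have "exp (real n * (L - 2 * \<nu> * \<kappa>)) = exp (L - 2 * \<nu> * \<kappa>) ^ n" by (simp add: exp_pow)
  finally show ?thesis .
qed

lemma alg_B:
  fixes dd \<beta> L \<kappa> K h :: real and n :: nat
  assumes dd: "0 < dd" and \<beta>: "\<beta> = exp (- L)" and b1: "\<beta> < 1" and h: "0 < h"
    and K: "K \<le> \<kappa> / h * real n"
  shows "exp (2 * (h * K)) / dd * (2 * \<beta> ^ n / (1 - \<beta>)) \<le> (2 / (dd * (1 - \<beta>))) * exp (2 * \<kappa> - L) ^ n"
proof -
  have "h * K \<le> h * (\<kappa> / h * real n)" using K h by (intro mult_left_mono) auto
  hence hk: "h * K \<le> \<kappa> * real n" using h by simp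
  have "exp (2 * (h * K)) * \<beta> ^ n = exp (2 * (h * K)) * exp (- (real n * L))" using \<beta> by (simp add: exp_pow)
  also have "\<dots> = exp (2 * (h * K) - real n * L)" by (simp add: exp_diff exp_minus field_simps)
  also have "\<dots> \<le> exp (real n * (2 * \<kappa> - L))" using hk by (simp add: algebra_simps)
  also have "\<dots> = exp (2 * \<kappa> - L) ^ n" by (simp add: exp_pow)
  finally have e: "exp (2 * (h * K)) * \<beta> ^ n \<le> exp (2 * \<kappa> - L) ^ n" .
  have "exp (2 * (h * K)) / dd * (2 * \<beta> ^ n / (1 - \<beta>)) = (2 / (dd * (1 - \<beta>))) * (exp (2 * (h * K)) * \<beta> ^ n)"
    using dd b1 by (simp add: field_simps)
  also have "\<dots> \<le> (2 / (dd * (1 - \<beta>))) * exp (2 * \<kappa> - L) ^ n" using e dd b1 by (intro mult_left_mono) auto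
  finally show ?thesis .
qed

theorem lemma3p4:
  fixes d :: nat and a b :: real and m m' c :: "real \<Rightarrow> real"
    and phi1 dphi1 :: "real \<Rightarrow> real \<Rightarrow> real"
    and s :: "nat \<Rightarrow> real" and phistar :: "real \<Rightarrow> real"
  assumes d: "d \<ge> 1"
    and ab: "0 < a" "a < b" "b < 1" "a + b = 1"
    and m_C1: "C1_on {0..1} m m'"
    and m_nonconst: "\<exists>x\<in>{0..1}. \<exists>y\<in>{0..1}. m x \<noteq> m y"
    and c_cont: "continuous_on {0..1} c"
    and H1: "\<forall>r\<in>{0..1}. m r = m (1 - r)" "\<forall>r\<in>{a..b}. m r = 0"
    and H2: "\<forall>r\<in>{0..1}. c r > 0" "\<forall>r\<in>{0..a} \<union> {b..1}. c r > lamD d c a b"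
    and SD: "in_SD a b m m'"
    and phi1: "\<And>t. C1_on {0..1} (phi1 t) (dphi1 t)"
      "\<And>t. \<forall>r\<in>{0..1}. phi1 t r > 0"
      "\<And>t. mass d m t (phi1 t) = 1"
      "\<And>t. energy d m c t (phi1 t) (dphi1 t) = lam d m c t"
    and s_lim: "filterlim s at_top sequentially"
    and lam_lim: "(\<lambda>i. ereal (lam d m c (s i))) \<longlonglongrightarrow> Liminf at_top (\<lambda>t. ereal (lam d m c t))"
    and phi_lim: "uniform_limit {a..b} (\<lambda>i. phi1 (s i)) phistar sequentially"
  shows "phistar a = 0 \<and> phistar b = 0"
proof -
  obtain \<delta> h \<alpha> \<beta> \<nu> l where prm: "0 < \<delta>" "\<delta> < a" "0 < h" "h < \<alpha>" "\<alpha> < \<beta>" "\<beta> < 1" "1 < \<nu>"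
    and sm: "(\<lambda>i. \<alpha> ^ (Suc i + l) + \<beta> ^ (Suc i + l)) sums (a - \<delta>)"
    and ge: "\<forall>r\<in>{\<delta>..a} \<union> {b..1 - \<delta>}. m r \<ge> mtilde a b \<delta> h \<alpha> \<beta> \<nu> l r"
    using SD unfolding in_SD_def by blast
  have ge': "\<forall>r\<in>{\<delta>..a}. m r \<ge> mtilde a b \<delta> h \<alpha> \<beta> \<nu> l r" using ge by auto
  have ma: "m a = 0" using H1(2) ab by auto
  note mb = m_bounds[OF prm sm ge' ma]
  have a0: "0 < \<alpha>" using prm by linarith
  have b0: "0 < \<beta>" using prm by linarith
  have h1: "h < 1" using prm by linarith
  note xf = xseq_facts[OF a0 prm(5,6) sm]
  have mc: "continuous_on {0..1} m"
    using m_C1 unfolding C1_on_def by (intro DERIV_continuous_on) auto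
  obtain Lam where Lam: "\<forall>t. lam d m c t \<le> Lam" using lam_bounded[OF ab(1-3) H1(2) H2(1)] by blast
  have en: "energy d m c t (phi1 t) (dphi1 t) \<le> Lam" for t using phi1(4) Lam by simp
  define L where "L = - ln \<beta>"
  have Lpos: "0 < L" using prm b0 by (simp add: L_def)
  have \<beta>L: "\<beta> = exp (- L)" using b0 by (simp add: L_def)
  define \<kappa> where "\<kappa> = L * (1 + \<nu>) / (4 * \<nu>)"
  have \<kappa>pos: "0 < \<kappa>" using Lpos prm by (simp add: \<kappa>_def)
  define Cc where "Cc = \<kappa> / h"
  have Ccpos: "0 < Cc" using \<kappa>pos prm by (simp add: Cc_def)
  define N where "N = (\<lambda>t::real. LEAST n. t * h ^ n \<le> Cc * real n)"
  define \<rho>1 where "\<rho>1 = exp (L - 2 * \<nu> * \<kappa>)"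
  define \<rho>2 where "\<rho>2 = exp (2 * \<kappa> - L)"
  have r1: "\<rho>1 < 1" "0 < \<rho>1"
  proof -
    have "2 * \<nu> * \<kappa> = L * (1 + \<nu>) / 2" using prm by (simp add: \<kappa>_def field_simps)
    moreover have "L < L * \<nu>" using Lpos prm by simp
    ultimately have "L - 2 * \<nu> * \<kappa> < 0" by (simp add: field_simps)
    thus "\<rho>1 < 1" "0 < \<rho>1" by (simp_all add: \<rho>1_def)
  qed
  have r2: "\<rho>2 < 1" "0 < \<rho>2"
  proof -
    have "2 * \<kappa> * \<nu> = L * (1 + \<nu>) / 2" using prm by (simp add: \<kappa>_def field_simps)
    moreover have "L < L * \<nu>" using Lpos prm by simp
    ultimately have "(2 * \<kappa> - L) * \<nu> < 0" by (simp add: field_simps)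
    hence "2 * \<kappa> - L < 0" using prm by (simp add: mult_less_0_iff)
    thus "\<rho>2 < 1" "0 < \<rho>2" by (simp_all add: \<rho>2_def)
  qed
  define dd where "dd = \<delta> ^ (d - 1)"
  have ddpos: "0 < dd" using prm by (simp add: dd_def)
  define C1 where "C1 = 2 * exp (2 * \<nu> * \<kappa>) / (dd * \<beta> ^ (Suc l))"
  define C2 where "C2 = 2 / (dd * (1 - \<beta>))"
  define G where "G = (\<lambda>n::nat. sqrt (C1 * \<rho>1 ^ n) + (Lam + C2) * sqrt \<rho>2 ^ n / 2)"

  have bound: "phi1 t a \<le> G (N t) \<and> phi1 t b \<le> G (N t)" if t: "0 < t" for t
  proof -
    define n where "n = N t"
    have K1: "t * h ^ n \<le> Cc * real n" and K2: "h * Cc * (real n - 1) < t * h ^ n"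
      using choose_n[OF prm(3) h1 Ccpos t] unfolding n_def N_def by auto
    let ?x = "xseq \<delta> \<alpha> \<beta> l" and ?y = "yseq \<delta> \<alpha> \<beta> l"
    define u where "u = ?y n"
    define v where "v = (?y n + ?x (Suc n)) / 2"
    have yx: "?y n < ?x (Suc n)" using b0 by (simp add: yseq_def xseq_Suc)
    have vu: "v - u = \<beta> ^ (Suc n + l) / 2" by (simp add: u_def v_def yseq_def xseq_Suc field_simps)
    have xge: "\<delta> \<le> ?x n" using xf(1,2) by (metis le0 strict_mono_less_eq)
    have xu: "?x n \<le> u" using a0 by (simp add: u_def yseq_def)
    have xa: "?x (Suc n) < a" by (rule xf(4))
    have uv: "u < v" "v < ?x (Suc n)" using yx by (simp_all add: u_def v_def)
    have Dn: "a - ?x n \<le> 2 * \<beta> ^ n / (1 - \<beta>)" by (rule xf(5))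
    define lm where "lm = sqrt \<rho>2 ^ n"
    have lm: "0 < lm" using r2 by (simp add: lm_def)
    define P where "P = \<nu> * h ^ n"
    define Q where "Q = h ^ Suc n"
    define Bd where "Bd = sqrt (1 / (dd * exp (2 * t * P) * (v - u)))
                 + (lm * Lam + exp (2 * t * Q) / dd * (2 * \<beta> ^ n / (1 - \<beta>)) / lm) / 2"
    have BdG: "Bd \<le> G n"
    proof -
      define K where "K = t * h ^ n"
      have A: "1 / (dd * exp (2 * \<nu> * K) * (\<beta> ^ (Suc n + l) / 2)) \<le> C1 * \<rho>1 ^ n"
        unfolding C1_def \<rho>1_def
        by (rule alg_A[OF ddpos \<beta>L _ \<kappa>pos]) (use K2 prm in \<open>simp_all add: K_def Cc_def\<close>)
      have tp: "2 * t * P = 2 * \<nu> * K" by (simp add: P_def K_def)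
      have "1 / (dd * exp (2 * t * P) * (v - u)) = 1 / (dd * exp (2 * \<nu> * K) * (\<beta> ^ (Suc n + l) / 2))"
        by (simp only: tp vu)
      hence A': "sqrt (1 / (dd * exp (2 * t * P) * (v - u))) \<le> sqrt (C1 * \<rho>1 ^ n)"
        using A by (simp only: real_sqrt_le_mono)
      have B: "exp (2 * (h * K)) / dd * (2 * \<beta> ^ n / (1 - \<beta>)) \<le> C2 * \<rho>2 ^ n"
        unfolding C2_def \<rho>2_def
        by (rule alg_B[OF ddpos \<beta>L prm(6) prm(3)]) (use K1 in \<open>simp add: K_def Cc_def\<close>)
      have tq: "2 * t * Q = 2 * (h * K)" by (simp add: Q_def K_def)
      have B': "exp (2 * t * Q) / dd * (2 * \<beta> ^ n / (1 - \<beta>)) / lm \<le> C2 * \<rho>2 ^ n / lm"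
        unfolding tq using B lm by (intro divide_right_mono) auto
      have "lm * lm = (sqrt \<rho>2 * sqrt \<rho>2) ^ n" unfolding lm_def by (rule power_mult_distrib[symmetric])
      hence "\<rho>2 ^ n = lm * lm" using r2 by simp
      hence "C2 * \<rho>2 ^ n / lm = C2 * lm" using lm by simp
      hence X: "exp (2 * t * Q) / dd * (2 * \<beta> ^ n / (1 - \<beta>)) / lm \<le> C2 * lm" using B' by simp
      have gen: "\<And>X. X \<le> C2 * lm \<Longrightarrow> (lm * Lam + X) / 2 \<le> (Lam + C2) * lm / 2"
        by (simp add: algebra_simps)
      have "(lm * Lam + exp (2 * t * Q) / dd * (2 * \<beta> ^ n / (1 - \<beta>)) / lm) / 2 \<le> (Lam + C2) * lm / 2"
        by (rule gen[OF X])
      moreover have "G n = sqrt (C1 * \<rho>1 ^ n) + (Lam + C2) * lm / 2" by (simp add: G_def lm_def)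
      ultimately show ?thesis unfolding Bd_def using A' by linarith
    qed
    define Dv where "Dv = 2 * \<beta> ^ n / (1 - \<beta>)"
    have f1: "\<delta> \<le> u" using xge xu by simp
    have f2: "u < v" by (rule uv(1))
    have f3: "v < a" using uv(2) xa by simp
    have f4: "a - u \<le> Dv" using Dn xu unfolding Dv_def by simp
    have f5: "b = 1 - a" using ab by simp
    have f6: "a < 1" "0 < a" "\<delta> < a" using ab prm by simp_all
    have mP0: "P \<le> m r" if "r \<in> {u..v}" for r
      unfolding P_def
    proof (rule mb(1))
      show "r \<in> {?y n..<?x (Suc n)}" using that uv(2) unfolding u_def by simp
    qed
    have mQ0: "- Q \<le> m r" if "r \<in> {u..a}" for r
      unfolding Q_def
    proof (rule mb(2))
      show "r \<in> {?y n..a}" using that unfolding u_def by simp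
    qed
    have phiA: "phi1 t a \<le> Bd"
      unfolding Bd_def dd_def Dv_def[symmetric]
    proof (rule side_est[OF phi1(1) mc c_cont H2(1) t prm(1) phi1(3) en _ _ _ _ _ _ _ lm])
      show "u < v" by (rule f2)
      show "\<delta> \<le> u" by (rule f1)
      show "v \<le> 1" using f3 f6 by simp
      show "P \<le> m r" if "r \<in> {u..v}" for r using that by (rule mP0)
      show "{min p a..max p a} \<subseteq> {\<delta>..1}" if "p \<in> {u..v}" for p
      proof -
        have "p \<le> a" using that f3 by simp
        hence "min p a = p" "max p a = a" by simp_all
        thus ?thesis using that f1 f6 by auto
      qed
      show "- Q \<le> m r" if "p \<in> {u..v}" "r \<in> {min p a..max p a}" for p r
      proof (rule mQ0)
        have "p \<le> a" using that f3 by simp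
        hence "min p a = p" "max p a = a" by simp_all
        thus "r \<in> {u..a}" using that by simp
      qed
      show "\<bar>p - a\<bar> \<le> Dv" if "p \<in> {u..v}" for p
      proof -
        have "u \<le> p" "p \<le> a" using that f3 by simp_all
        thus ?thesis using f4 by simp
      qed
    qed
    have phiB: "phi1 t b \<le> Bd"
    proof -
      have vu': "(1 - u) - (1 - v) = v - u" by simp
      have "phi1 t b \<le> sqrt (1 / (dd * exp (2 * t * P) * ((1 - u) - (1 - v))))
                 + (lm * Lam + exp (2 * t * Q) / dd * Dv / lm) / 2"
        unfolding dd_def
      proof (rule side_est[OF phi1(1) mc c_cont H2(1) t prm(1) phi1(3) en _ _ _ _ _ _ _ lm])
        show "1 - v < 1 - u" using f2 by simp
        show "\<delta> \<le> 1 - v" using f3 f5 ab(2) f6 by simp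
        show "1 - u \<le> 1" using f1 prm(1) by simp
        show "P \<le> m r" if r: "r \<in> {1 - v..1 - u}" for r
        proof -
          have "r \<in> {0..1}" using r f1 f3 f6 prm(1) by simp
          hence "m r = m (1 - r)" using H1(1) by blast
          moreover have "P \<le> m (1 - r)" by (rule mP0) (use r in simp)
          ultimately show ?thesis by simp
        qed
        show "{min p b..max p b} \<subseteq> {\<delta>..1}" if "p \<in> {1 - v..1 - u}" for p
        proof -
          have "b \<le> p" using that f3 f5 by simp
          hence "min p b = b" "max p b = p" by simp_all
          thus ?thesis using that f1 f6 f5 ab(2) prm(1) by auto
        qed
        show "- Q \<le> m r" if p: "p \<in> {1 - v..1 - u}" and r: "r \<in> {min p b..max p b}" for p r
        proof -
          have "b \<le> p" using p f3 f5 by simp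
          hence "min p b = b" "max p b = p" by simp_all
          hence rr: "b \<le> r" "r \<le> p" using r by simp_all
          have "r \<in> {0..1}" using rr p f1 f5 f6 prm(1) by simp
          hence "m r = m (1 - r)" using H1(1) by blast
          moreover have "- Q \<le> m (1 - r)" by (rule mQ0) (use rr p f5 in simp)
          ultimately show ?thesis by simp
        qed
        show "\<bar>p - b\<bar> \<le> Dv" if "p \<in> {1 - v..1 - u}" for p
        proof -
          have "b \<le> p" "p \<le> 1 - u" using that f3 f5 by simp_all
          thus ?thesis using f4 f5 by simp
        qed
      qed
      thus ?thesis using vu' by (simp add: Bd_def dd_def Dv_def)
    qed
    show ?thesis using phiA phiB BdG by (simp add: n_def)
  qed

  have sN: "filterlim (\<lambda>i. N (s i)) at_top sequentially"
    unfolding N_def by (rule filterlim_compose[OF choose_n_tendsto[OF prm(3) h1 Ccpos] s_lim])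
  have G0: "G \<longlonglongrightarrow> 0"
  proof -
    have "(\<lambda>n. sqrt (C1 * \<rho>1 ^ n)) \<longlonglongrightarrow> sqrt (C1 * 0)"
      using r1 by (intro tendsto_intros LIMSEQ_power_zero) auto
    moreover have "(\<lambda>n. (Lam + C2) * sqrt \<rho>2 ^ n / 2) \<longlonglongrightarrow> (Lam + C2) * 0 / 2"
      using r2 by (intro tendsto_intros LIMSEQ_power_zero) auto
    ultimately have "(\<lambda>n. sqrt (C1 * \<rho>1 ^ n) + (Lam + C2) * sqrt \<rho>2 ^ n / 2) \<longlonglongrightarrow> sqrt (C1 * 0) + (Lam + C2) * 0 / 2"
      by (rule tendsto_add)
    thus ?thesis by (simp add: G_def)
  qed
  have GN: "(\<lambda>i. G (N (s i))) \<longlonglongrightarrow> 0" by (rule filterlim_compose[OF G0 sN])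
  have spos: "eventually (\<lambda>i. 0 < s i) sequentially"
    using s_lim by (simp add: filterlim_at_top_dense)
  have lim0: "phistar e = 0" if e: "e \<in> {a..b}" and bd: "\<And>t. 0 < t \<Longrightarrow> phi1 t e \<le> G (N t)" for e
  proof -
    have pl: "(\<lambda>i. phi1 (s i) e) \<longlonglongrightarrow> phistar e" by (rule tendsto_uniform_limitI[OF phi_lim e])
    have e01: "e \<in> {0..1}" using e ab by auto
    have "(\<lambda>i. phi1 (s i) e) \<longlonglongrightarrow> 0"
    proof (rule tendsto_sandwich[OF _ _ tendsto_const GN])
      show "eventually (\<lambda>i. 0 \<le> phi1 (s i) e) sequentially"
      proof (rule always_eventually, rule allI)
        fix i show "0 \<le> phi1 (s i) e" using phi1(2)[of "s i"] e01 by (meson less_imp_le)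
      qed
      show "eventually (\<lambda>i. phi1 (s i) e \<le> G (N (s i))) sequentially"
        using spos by (rule eventually_mono) (rule bd)
    qed
    thus ?thesis using pl LIMSEQ_unique by blast
  qed
  show ?thesis
  proof
    show "phistar a = 0" by (rule lim0) (use ab bound in auto)
    show "phistar b = 0" by (rule lim0) (use ab bound in auto)
  qed
qed

end
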